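(* Let $N\geq1$ be an integer, $t\in\mathbb R$ fixed, and $s\geq0$. Define $$\mathbf B_2^Q(u,v):=\begin{pmatrix}B_2(\mathcal Pu,\mathcal Qv)+B_2(\mathcal Qu,v)\\ B_2(\mathcal Pu,\mathcal Qv)+B_2(\mathcal Qu,v)\end{pmatrix}-\begin{pmatrix}B_2(\mathcal Pu,\mathcal Qu)+B_2(\mathcal Qu,u)\\ B_2(\mathcal Pv,\mathcal Qv)+B_2(\mathcal Qv,v)\end{pmatrix}.$$ Then $\mathbf B_2^Q$ maps $(\dot H^s)^2$ into $(\dot H^s)^2$ and there is a constant $C(s)$, independent of $N$ and $t$, such that for all $(u,v),(\tilde u,\tilde v)\in(\dot H^s)^2$, $$\|\mathbf B_2^Q(u,v)\|_{(\dot H^s)^2}\leq C(s)\frac1N\|(u,v)\|^2_{(\dot H^s)^2},$$ $$\|\mathbf B_2^Q(u,v)-\mathbf B_2^Q(\tilde u,\tilde v)\|_{(\dot H^s)^2}\leq C(s)\frac1N\|(u,v)-(\tilde u,\tilde v)\|_{(\dot H^s)^2}\big(\|(u,v)\|_{(\dot H^s)^2}+\|(\tilde u,\tilde v)\|_{(\dot H^s)^2}\big).$$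
   Context: $\mathbb Z_0=\mathbb Z\setminus\{0\}$. Mean-zero real-valued functions on $\mathbb T=[0,2\pi]$ are identified with their Fourier coefficients $(u_k)_{k\in\mathbb Z_0}$, $\overline{u_k}=u_{-k}$. For $s\in\mathbb R$, $\|u\|_{\dot H^s}^2=\sum_{k\in\mathbb Z_0}|k|^{2s}|u_k|^2$, $\dot H^s$ the space of such $u$ with finite norm, $\|(u,v)\|^2_{(\dot H^s)^2}=\|u\|^2_{\dot H^s}+\|v\|^2_{\dot H^s}$. $\mathcal P$ is the projection onto modes $|k|\leq N$: $(\mathcal Pu)_k=u_k$ if $|k|\leq N$, $0$ otherwise; $\mathcal Q=I-\mathcal P$ is the projection onto modes $|k|>N$. The bilinear operator $B_2$ is defined by $B_2(\phi,\psi)_k:=\frac16\sum_{k_1+k_2=k}\frac{e^{3ikk_1k_2t}}{k_1k_2}\phi_{k_1}\psi_{k_2}$, $k\in\mathbb Z_0$ (sum over $k_1,k_2\in\mathbb Z_0$). *)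

theory Defs
  imports "HOL-Analysis.Analysis"
begin

text \<open>Mean-zero real-valued functions on the torus, identified with their Fourier
coefficients u :: int \<Rightarrow> complex (the value at 0 is the zero mean).\<close>

definition hs_norm2 :: "real \<Rightarrow> (int \<Rightarrow> complex) \<Rightarrow> real" where
  "hs_norm2 s u = (\<Sum>\<^sub>\<infinity>k\<in>UNIV - {0}. (real_of_int \<bar>k\<bar>) powr (2 * s) * (cmod (u k))\<^sup>2)"

definition in_Hs :: "real \<Rightarrow> (int \<Rightarrow> complex) \<Rightarrow> bool" where
  "in_Hs s u \<longleftrightarrow> u 0 = 0 \<and> (\<forall>k. cnj (u k) = u (- k)) \<and>
     (\<lambda>k. (real_of_int \<bar>k\<bar>) powr (2 * s) * (cmod (u k))\<^sup>2) summable_on (UNIV - {0})"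

definition pair_norm :: "real \<Rightarrow> (int \<Rightarrow> complex) \<Rightarrow> (int \<Rightarrow> complex) \<Rightarrow> real" where
  "pair_norm s u v = sqrt (hs_norm2 s u + hs_norm2 s v)"

definition projP :: "nat \<Rightarrow> (int \<Rightarrow> complex) \<Rightarrow> (int \<Rightarrow> complex)" where
  "projP N u = (\<lambda>k. if \<bar>k\<bar> \<le> int N then u k else 0)"

definition projQ :: "nat \<Rightarrow> (int \<Rightarrow> complex) \<Rightarrow> (int \<Rightarrow> complex)" where
  "projQ N u = (\<lambda>k. if \<bar>k\<bar> > int N then u k else 0)"

text \<open>B_2(phi,psi)_k = 1/6 sum over k1+k2=k, k1,k2 nonzero; the mode k = 0 is not part of
Z_0 and is set to 0.\<close>
definition B2 :: "real \<Rightarrow> (int \<Rightarrow> complex) \<Rightarrow> (int \<Rightarrow> complex) \<Rightarrow> (int \<Rightarrow> complex)" where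
  "B2 t \<phi> \<psi> = (\<lambda>k. if k = 0 then 0 else
     (1/6) * (\<Sum>\<^sub>\<infinity>k1\<in>{k1. k1 \<noteq> 0 \<and> k1 \<noteq> k}.
        exp (\<i> * of_real (3 * real_of_int k * real_of_int k1 * real_of_int (k - k1) * t))
          / of_int (k1 * (k - k1)) * \<phi> k1 * \<psi> (k - k1)))"

definition BQ :: "nat \<Rightarrow> real \<Rightarrow> (int \<Rightarrow> complex) \<Rightarrow> (int \<Rightarrow> complex)
                   \<Rightarrow> (int \<Rightarrow> complex) \<times> (int \<Rightarrow> complex)" where
  "BQ N t u v =
    ((\<lambda>k. B2 t (projP N u) (projQ N v) k + B2 t (projQ N u) v k
          - (B2 t (projP N u) (projQ N u) k + B2 t (projQ N u) u k)),
     (\<lambda>k. B2 t (projP N u) (projQ N v) k + B2 t (projQ N u) v k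
          - (B2 t (projP N v) (projQ N v) k + B2 t (projQ N v) v k)))"

end

theory Submission
  imports Defs
begin



lemma Z_summable: "(\<lambda>k::int. 1 / (real_of_int k)^2) summable_on UNIV"
proof -
  have s1: "summable (\<lambda>n::nat. 1 / (real (Suc n))^2)"
  proof -
    have "summable (\<lambda>n::nat. inverse (real n ^ 2))"
      by (rule inverse_power_summable) auto
    then have "summable (\<lambda>n::nat. inverse (real (Suc n) ^ 2))"
      using summable_Suc_iff[of "\<lambda>n. inverse (real n ^ 2)"] by simp
    then show ?thesis by (simp add: divide_inverse)
  qed
  have p: "(\<lambda>k::int. 1 / (real_of_int k)^2) summable_on range (\<lambda>n::nat. int (Suc n))"
    apply (subst summable_on_reindex)
    apply (simp add: inj_on_def)
    apply (subst summable_on_UNIV_nonneg_real_iff)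
    using s1 by (auto simp: o_def)
  have m: "(\<lambda>k::int. 1 / (real_of_int k)^2) summable_on range (\<lambda>n::nat. - int (Suc n))"
    apply (subst summable_on_reindex)
    apply (simp add: inj_on_def)
    apply (subst summable_on_UNIV_nonneg_real_iff)
    using s1 by (auto simp: o_def power2_eq_square algebra_simps)
  have z: "(\<lambda>k::int. 1 / (real_of_int k)^2) summable_on {0}" by simp
  have U: "UNIV = {0} \<union> (range (\<lambda>n::nat. int (Suc n)) \<union> range (\<lambda>n::nat. - int (Suc n)))"
  proof -
    have "k \<in> {0} \<union> (range (\<lambda>n::nat. int (Suc n)) \<union> range (\<lambda>n::nat. - int (Suc n)))" for k :: int
    proof (cases "k > 0")
      case True then have "k = int (Suc (nat (k - 1)))" by simp
      then show ?thesis by blast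
    next
      case False
      show ?thesis
      proof (cases "k = 0")
        case False
        with \<open>\<not> k > 0\<close> have "k = - int (Suc (nat (- k - 1)))" by simp
        then show ?thesis by blast
      qed simp
    qed
    then show ?thesis by blast
  qed
  have "(\<lambda>k::int. 1 / (real_of_int k)^2) summable_on ({0} \<union> (range (\<lambda>n::nat. int (Suc n)) \<union> range (\<lambda>n::nat. - int (Suc n))))"
    apply (rule summable_on_Un_disjoint[OF z])
     apply (rule summable_on_Un_disjoint[OF p m])
    by auto
  then show ?thesis using U by simp
qed




definition W :: "real \<Rightarrow> (int \<Rightarrow> complex) \<Rightarrow> bool" where
  "W s f \<longleftrightarrow> (\<lambda>k. real_of_int \<bar>k\<bar> powr (2 * s) * (cmod (f k))\<^sup>2) summable_on UNIV"

definition nm :: "real \<Rightarrow> (int \<Rightarrow> complex) \<Rightarrow> real" where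
  "nm s f = infsum (\<lambda>k. real_of_int \<bar>k\<bar> powr (2 * s) * (cmod (f k))\<^sup>2) UNIV"

lemma hs_norm2_nm: "hs_norm2 s f = nm s f"
  unfolding hs_norm2_def nm_def by (rule infsum_cong_neutral) auto

lemma in_Hs_W: "in_Hs s f \<Longrightarrow> W s f"
  unfolding in_Hs_def W_def by (subst (asm) summable_on_cong_neutral[where T=UNIV]) auto

lemma nm_nonneg: "nm s f \<ge> 0"
  unfolding nm_def by (rule infsum_nonneg) auto

lemma infsum_sum_fin:
  fixes g :: "'i \<Rightarrow> 'a \<Rightarrow> real"
  assumes "finite I" "\<And>i. i \<in> I \<Longrightarrow> g i summable_on A"
  shows "(\<lambda>x. \<Sum>i\<in>I. g i x) summable_on A \<and> infsum (\<lambda>x. \<Sum>i\<in>I. g i x) A = (\<Sum>i\<in>I. infsum (g i) A)"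
  using assms
proof (induction I rule: finite_induct)
  case empty then show ?case by simp
next
  case (insert j I)
  then have h: "(\<lambda>x. \<Sum>i\<in>I. g i x) summable_on A" "infsum (\<lambda>x. \<Sum>i\<in>I. g i x) A = (\<Sum>i\<in>I. infsum (g i) A)"
    by auto
  have gj: "g j summable_on A" using insert by auto
  show ?case using insert h gj
    by (simp add: summable_on_add infsum_add)
qed

lemma W_sum_bound:
  assumes "finite I" "\<And>i. i \<in> I \<Longrightarrow> W s (g i)"
    and "\<And>k. cmod (h k) \<le> (\<Sum>i\<in>I. cmod (g i k))"
  shows "W s h \<and> nm s h \<le> real (card I) * (\<Sum>i\<in>I. nm s (g i))"
proof -
  define w where "w k = real_of_int \<bar>k\<bar> powr (2 * s)" for k :: int
  have w0: "w k \<ge> 0" for k unfolding w_def by simp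
  have pt: "w k * (cmod (h k))\<^sup>2 \<le> (\<Sum>i\<in>I. real (card I) * (w k * (cmod (g i k))\<^sup>2))" for k
  proof -
    have "(cmod (h k))\<^sup>2 \<le> (\<Sum>i\<in>I. cmod (g i k))\<^sup>2"
      using assms(3)[of k] by (simp add: power_mono)
    also have "\<dots> \<le> (\<Sum>i\<in>I. (cmod (g i k))\<^sup>2) * card I"
      by (rule sum_squared_le_sum_of_squares)
    finally have "w k * (cmod (h k))\<^sup>2 \<le> w k * ((\<Sum>i\<in>I. (cmod (g i k))\<^sup>2) * card I)"
      using w0 by (simp add: mult_left_mono)
    then show ?thesis by (simp add: sum_distrib_left sum_distrib_right algebra_simps)
  qed
  have gs: "(\<lambda>k. real (card I) * (w k * (cmod (g i k))\<^sup>2)) summable_on UNIV" if "i \<in> I" for i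
    using assms(2)[OF that] unfolding W_def w_def by (intro summable_on_cmult_right) 
  from infsum_sum_fin[OF assms(1), of "\<lambda>i k. real (card I) * (w k * (cmod (g i k))\<^sup>2)" UNIV, OF gs]
  have S: "(\<lambda>k. \<Sum>i\<in>I. real (card I) * (w k * (cmod (g i k))\<^sup>2)) summable_on UNIV"
    "infsum (\<lambda>k. \<Sum>i\<in>I. real (card I) * (w k * (cmod (g i k))\<^sup>2)) UNIV
       = (\<Sum>i\<in>I. infsum (\<lambda>k. real (card I) * (w k * (cmod (g i k))\<^sup>2)) UNIV)" by auto
  have Wh: "(\<lambda>k. w k * (cmod (h k))\<^sup>2) summable_on UNIV"
    by (rule summable_on_comparison_test[OF S(1)]) (use pt w0 in auto)
  have "nm s h \<le> infsum (\<lambda>k. \<Sum>i\<in>I. real (card I) * (w k * (cmod (g i k))\<^sup>2)) UNIV"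
    unfolding nm_def w_def[symmetric] by (rule infsum_mono[OF Wh S(1) pt])
  also have "\<dots> = (\<Sum>i\<in>I. infsum (\<lambda>k. real (card I) * (w k * (cmod (g i k))\<^sup>2)) UNIV)"
    by (rule S(2))
  also have "\<dots> = (\<Sum>i\<in>I. real (card I) * nm s (g i))"
    unfolding nm_def w_def
    by (intro sum.cong refl infsum_cmult_right) (use assms(2) in \<open>auto simp: W_def\<close>)
  finally show ?thesis using Wh unfolding W_def w_def by (simp add: sum_distrib_left)
qed

lemma W_list_bound:
  assumes "\<And>g. g \<in> set gs \<Longrightarrow> W s g"
    and "\<And>k. cmod (h k) \<le> sum_list (map (\<lambda>g. cmod (g k)) gs)"
  shows "W s h \<and> nm s h \<le> real (length gs) * sum_list (map (nm s) gs)"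
proof -
  have e: "sum_list (map F gs) = (\<Sum>i\<in>{..<length gs}. F (gs ! i))" for F :: "_ \<Rightarrow> real"
    by (simp add: sum_list_sum_nth atLeast0LessThan)
  have "W s h \<and> nm s h \<le> real (card {..<length gs}) * (\<Sum>i\<in>{..<length gs}. nm s (gs ! i))"
    by (rule W_sum_bound) (use assms e in auto)
  then show ?thesis by (simp add: e)
qed

lemma W_le:
  assumes "W s g" "\<And>k. cmod (f k) \<le> cmod (g k)"
  shows "W s f \<and> nm s f \<le> nm s g"
  using W_list_bound[of "[g]" s f] assms by auto




lemma eps_bound:
  fixes L A B :: real
  assumes A: "A \<ge> 0" and B: "B \<ge> 0" and H: "\<And>e. e > 0 \<Longrightarrow> L \<le> (e*A + B/e)/2"
  shows "L \<le> sqrt (A*B)"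
proof (cases "L \<le> 0")
  case True then show ?thesis by (meson order_trans real_sqrt_ge_zero A B mult_nonneg_nonneg)
next
  case False
  then have L: "L > 0" by simp
  show ?thesis
  proof (cases "A = 0")
    case True
    have "L \<le> (B / ((B+1)/L))/2" using H[of "(B+1)/L"] L B True by simp
    also have "\<dots> = B*L/(2*(B+1))" using L by (simp add: field_simps)
    also have "\<dots> < L"
    proof -
      have "B*L < (2*(B+1))*L" using L B by (intro mult_strict_right_mono) auto
      then show ?thesis using B by (simp add: pos_divide_less_eq mult.commute)
    qed
    finally show ?thesis by simp
  next
    case A0: False
    show ?thesis
    proof (cases "B = 0")
      case True
      have "L \<le> (L/(A+1)*A)/2" using H[of "L/(A+1)"] L A True by simp
      also have "\<dots> < L"
      proof -
        have "A*L < (2*(A+1))*L" using L A by (intro mult_strict_right_mono) auto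
        then show ?thesis using A by (simp add: pos_divide_less_eq mult.commute)
      qed
      finally show ?thesis by simp
    next
      case False
      then have Ap: "A > 0" and Bp: "B > 0" using A B A0 by auto
      define e where "e = sqrt (B/A)"
      have ep: "e > 0" using Ap Bp by (simp add: e_def)
      have ee: "e*e = B/A" using Ap Bp unfolding e_def by simp
      have "e*A = sqrt (B/A) * sqrt (A\<^sup>2)" using Ap unfolding e_def by simp
      also have "\<dots> = sqrt (B/A * A\<^sup>2)" by (simp only: real_sqrt_mult)
      also have "B/A * A\<^sup>2 = A*B" using Ap by (simp add: power2_eq_square field_simps)
      finally have e1: "e*A = sqrt (A*B)" .
      have "B = e*e*A" using ee Ap by simp
      then have "B/e = e*A" using ep by (simp add: field_simps)
      with e1 have e2: "B/e = sqrt (A*B)" by simp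
      show ?thesis using H[OF ep] e1 e2 by simp
    qed
  qed
qed

lemma powr_sq: "(a::real) \<ge> 0 \<Longrightarrow> (a powr s)\<^sup>2 = a powr (2 * s)"
proof -
  have e: "2 * s = s + s" by simp
  have "a powr (2 * s) = a powr (s + s)" by (subst e) (rule refl)
  also have "\<dots> = a powr s * a powr s" by (rule powr_add)
  finally show ?thesis by (metis power2_eq_square)
qed

lemma amgm: "(e::real) > 0 \<Longrightarrow> x * y \<le> (e * x\<^sup>2 + y\<^sup>2 / e) / 2"
proof -
  assume e: "e > 0"
  have "0 \<le> (e*x - y)\<^sup>2 / e" using e by simp
  also have "(e*x - y)\<^sup>2 / e = e * x\<^sup>2 + y\<^sup>2 / e - 2 * (x*y)" using e
    by (simp add: power2_eq_square field_simps)
  finally show ?thesis by simp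
qed




definition Zc :: real where "Zc = infsum (\<lambda>k::int. 1 / (real_of_int k)\<^sup>2) UNIV"

lemma Zc_nonneg: "Zc \<ge> 0" unfolding Zc_def by (rule infsum_nonneg) auto

definition al :: "real \<Rightarrow> (int \<Rightarrow> complex) \<Rightarrow> int \<Rightarrow> real" where
  "al s f j = real_of_int \<bar>j\<bar> powr s * cmod (f j) / real_of_int \<bar>j\<bar>"

definition be :: "real \<Rightarrow> (int \<Rightarrow> complex) \<Rightarrow> int \<Rightarrow> real" where
  "be s f j = real_of_int \<bar>j\<bar> powr s * cmod (f j)"

lemma al_nonneg: "al s f j \<ge> 0" unfolding al_def by simp
lemma be_nonneg: "be s f j \<ge> 0" unfolding be_def by simp

lemma be_sq: "(be s f j)\<^sup>2 = real_of_int \<bar>j\<bar> powr (2 * s) * (cmod (f j))\<^sup>2"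
  unfolding be_def by (simp add: power_mult_distrib powr_sq)

lemma be_W: "W s f \<Longrightarrow> (\<lambda>j. (be s f j)\<^sup>2) summable_on UNIV \<and> infsum (\<lambda>j. (be s f j)\<^sup>2) UNIV = nm s f"
  unfolding W_def nm_def be_sq by simp

lemma al_l1:
  assumes "W s f"
  shows "al s f summable_on UNIV \<and> infsum (al s f) UNIV \<le> sqrt (nm s f * Zc)"
proof -
  define z where "z k = 1 / (real_of_int k)\<^sup>2" for k :: int
  have pt: "al s f j \<le> (e * (be s f j)\<^sup>2 + z j / e) / 2" if "e > 0" for e j
  proof -
    have "al s f j = be s f j * (1 / real_of_int \<bar>j\<bar>)" unfolding al_def be_def by simp
    also have "\<dots> \<le> (e * (be s f j)\<^sup>2 + (1 / real_of_int \<bar>j\<bar>)\<^sup>2 / e) / 2" by (rule amgm[OF that])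
    also have "(1 / real_of_int \<bar>j\<bar>)\<^sup>2 = z j" unfolding z_def by (simp add: power_divide)
    finally show ?thesis .
  qed
  have bs: "(\<lambda>j. (be s f j)\<^sup>2) summable_on UNIV" and bn: "infsum (\<lambda>j. (be s f j)\<^sup>2) UNIV = nm s f"
    using be_W[OF assms] by auto
  have zs: "z summable_on UNIV" unfolding z_def by (rule Z_summable)
  have zse: "(\<lambda>j. z j / e) summable_on UNIV" for e
    using summable_on_cmult_left[OF zs, of "1/e"] by simp
  have bse: "(\<lambda>j. e * (be s f j)\<^sup>2) summable_on UNIV" for e
    by (rule summable_on_cmult_right[OF bs])
  have ss0: "(\<lambda>j. e * (be s f j)\<^sup>2 + z j / e) summable_on UNIV" for e
    by (rule summable_on_add[OF bse zse])
  have ss: "(\<lambda>j. (e * (be s f j)\<^sup>2 + z j / e) / 2) summable_on UNIV" for e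
    using summable_on_cmult_left[OF ss0[of e], of "1/2"] by simp
  have as: "al s f summable_on UNIV"
    by (rule summable_on_comparison_test[OF ss[of 1]]) (use pt[of 1] al_nonneg in auto)
  have "infsum (al s f) UNIV \<le> (e * nm s f + Zc / e) / 2" if "e > 0" for e
  proof -
    have "infsum (al s f) UNIV \<le> infsum (\<lambda>j. (e * (be s f j)\<^sup>2 + z j / e) / 2) UNIV"
      by (rule infsum_mono[OF as ss pt[OF that]])
    also have "\<dots> = infsum (\<lambda>j. e * (be s f j)\<^sup>2 + z j / e) UNIV / 2"
      using infsum_cmult_left[of "1/2" "\<lambda>j. e * (be s f j)\<^sup>2 + z j / e" UNIV] ss0[of e] by simp
    also have "infsum (\<lambda>j. e * (be s f j)\<^sup>2 + z j / e) UNIV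
        = infsum (\<lambda>j. e * (be s f j)\<^sup>2) UNIV + infsum (\<lambda>j. z j / e) UNIV"
      by (rule infsum_add[OF bse zse])
    also have "infsum (\<lambda>j. e * (be s f j)\<^sup>2) UNIV = e * nm s f"
      using infsum_cmult_right[of e "\<lambda>j. (be s f j)\<^sup>2" UNIV] bs bn by simp
    also have "infsum (\<lambda>j. z j / e) UNIV = Zc / e"
      using infsum_cmult_left[of "1/e" z UNIV] zs unfolding Zc_def z_def by simp
    finally show ?thesis .
  qed
  then have "infsum (al s f) UNIV \<le> sqrt (nm s f * Zc)"
    by (intro eps_bound nm_nonneg Zc_nonneg) auto
  then show ?thesis using as by simp
qed




lemma eps_combo:
  fixes f g :: "'a \<Rightarrow> real"
  assumes "f summable_on A" "g summable_on A"
  shows "(\<lambda>j. (e * f j + g j / e) / 2) summable_on A \<and>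
         infsum (\<lambda>j. (e * f j + g j / e) / 2) A = (e * infsum f A + infsum g A / e) / 2"
proof -
  have fe: "(\<lambda>j. e * f j) summable_on A" by (rule summable_on_cmult_right[OF assms(1)])
  have ge: "(\<lambda>j. g j / e) summable_on A" using summable_on_cmult_left[OF assms(2), of "1/e"] by simp
  have s0: "(\<lambda>j. e * f j + g j / e) summable_on A" by (rule summable_on_add[OF fe ge])
  have ss: "(\<lambda>j. (e * f j + g j / e) / 2) summable_on A"
    using summable_on_cmult_left[OF s0, of "1/2"] by simp
  have "infsum (\<lambda>j. (e * f j + g j / e) / 2) A = infsum (\<lambda>j. e * f j + g j / e) A / 2"
    using infsum_cmult_left[of "1/2" "\<lambda>j. e * f j + g j / e" A] s0 by simp
  also have "infsum (\<lambda>j. e * f j + g j / e) A = infsum (\<lambda>j. e * f j) A + infsum (\<lambda>j. g j / e) A"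
    by (rule infsum_add[OF fe ge])
  also have "infsum (\<lambda>j. e * f j) A = e * infsum f A"
    using infsum_cmult_right[of e f A] assms by simp
  also have "infsum (\<lambda>j. g j / e) A = infsum g A / e"
    using infsum_cmult_left[of "1/e" g A] assms by simp
  finally show ?thesis using ss by simp
qed

lemma sq_le_infsum:
  fixes b :: "int \<Rightarrow> real"
  assumes "(\<lambda>j. (b j)\<^sup>2) summable_on UNIV"
  shows "(b m)\<^sup>2 \<le> infsum (\<lambda>j. (b j)\<^sup>2) UNIV"
  using finite_sum_le_infsum[OF assms, of "{m}"] by simp

lemma conv:
  fixes a b :: "int \<Rightarrow> real"
  assumes a0: "\<And>j. a j \<ge> 0" and b0: "\<And>j. b j \<ge> 0"
    and as: "a summable_on UNIV" and bs: "(\<lambda>j. (b j)\<^sup>2) summable_on UNIV"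
  shows "(\<forall>k. (\<lambda>j. a j * b (k - j)) summable_on UNIV) \<and>
         (\<lambda>k. (infsum (\<lambda>j. a j * b (k - j)) UNIV)\<^sup>2) summable_on UNIV \<and>
         infsum (\<lambda>k. (infsum (\<lambda>j. a j * b (k - j)) UNIV)\<^sup>2) UNIV
           \<le> (infsum a UNIV)\<^sup>2 * infsum (\<lambda>j. (b j)\<^sup>2) UNIV"
proof -
  define A where "A = infsum a UNIV"
  define Bn where "Bn = infsum (\<lambda>j. (b j)\<^sup>2) UNIV"
  define c where "c k = infsum (\<lambda>j. a j * b (k - j)) UNIV" for k
  define D where "D k = infsum (\<lambda>j. a j * (b (k - j))\<^sup>2) UNIV" for k
  have A0: "A \<ge> 0" unfolding A_def by (rule infsum_nonneg) (use a0 in auto)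
  have Bn0: "Bn \<ge> 0" unfolding Bn_def by (rule infsum_nonneg) auto
  have bsq: "(b m)\<^sup>2 \<le> Bn" for m unfolding Bn_def by (rule sq_le_infsum[OF bs])
  have bm: "b m \<le> sqrt Bn" for m using bsq[of m] by (simp add: real_le_rsqrt)
  have s1: "(\<lambda>j. a j * b (k - j)) summable_on UNIV" for k
    apply (rule summable_on_comparison_test[OF summable_on_cmult_left[OF as, of "sqrt Bn"]])
    using a0 b0 bm by (auto intro: mult_left_mono)
  have s2: "(\<lambda>j. a j * (b (k - j))\<^sup>2) summable_on UNIV" for k
    apply (rule summable_on_comparison_test[OF summable_on_cmult_left[OF as, of "Bn"]])
    using a0 b0 bsq by (auto intro: mult_left_mono)
  have c0: "c k \<ge> 0" for k unfolding c_def by (rule infsum_nonneg) (use a0 b0 in auto)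
  have D0: "D k \<ge> 0" for k unfolding D_def by (rule infsum_nonneg) (use a0 b0 in auto)
  have ck: "(c k)\<^sup>2 \<le> A * D k" for k
  proof -
    have "c k \<le> sqrt (A * D k)"
    proof (rule eps_bound[OF A0 D0])
      fix e :: real assume e: "e > 0"
      have pt: "a j * b (k - j) \<le> (e * a j + a j * (b (k - j))\<^sup>2 / e) / 2" for j
      proof -
        have "1 * b (k - j) \<le> (e * 1\<^sup>2 + (b (k - j))\<^sup>2 / e) / 2" by (rule amgm[OF e])
        then have h: "b (k - j) \<le> (e + (b (k - j))\<^sup>2 / e) / 2" by simp
        have "a j * b (k - j) \<le> a j * ((e + (b (k - j))\<^sup>2 / e) / 2)"
          by (rule mult_left_mono[OF h a0])
        then show ?thesis by (simp add: field_simps)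
      qed
      have E: "(\<lambda>j. (e * a j + a j * (b (k - j))\<^sup>2 / e) / 2) summable_on UNIV \<and>
         infsum (\<lambda>j. (e * a j + a j * (b (k - j))\<^sup>2 / e) / 2) UNIV = (e * A + D k / e) / 2"
        using eps_combo[OF as s2[of k], of e] unfolding A_def D_def by simp
      have "c k \<le> infsum (\<lambda>j. (e * a j + a j * (b (k - j))\<^sup>2 / e) / 2) UNIV"
        unfolding c_def by (rule infsum_mono[OF s1]) (use E pt in auto)
      then show "c k \<le> (e * A + D k / e) / 2" using E by simp
    qed
    then have "(c k)\<^sup>2 \<le> (sqrt (A * D k))\<^sup>2" using c0[of k] by (simp add: power_mono)
    also have "\<dots> = A * D k" using A0 D0[of k] by simp
    finally show ?thesis .
  qed
  have fin: "(\<Sum>k\<in>K. (c k)\<^sup>2) \<le> A\<^sup>2 * Bn" if K: "finite K" for K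
  proof -
    have inner: "(\<Sum>k\<in>K. (b (k - j))\<^sup>2) \<le> Bn" for j
    proof -
      have "(\<Sum>k\<in>K. (b (k - j))\<^sup>2) = (\<Sum>m\<in>(\<lambda>k. k - j) ` K. (b m)\<^sup>2)"
        by (subst sum.reindex) (auto simp: inj_on_def)
      also have "\<dots> \<le> Bn" unfolding Bn_def
        by (rule finite_sum_le_infsum[OF bs]) (use K in auto)
      finally show ?thesis .
    qed
    have IS: "(\<lambda>j. \<Sum>k\<in>K. a j * (b (k - j))\<^sup>2) summable_on UNIV \<and>
          infsum (\<lambda>j. \<Sum>k\<in>K. a j * (b (k - j))\<^sup>2) UNIV = (\<Sum>k\<in>K. D k)"
      using infsum_sum_fin[OF K, of "\<lambda>k j. a j * (b (k - j))\<^sup>2" UNIV] s2 unfolding D_def by auto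
    have "(\<Sum>k\<in>K. (c k)\<^sup>2) \<le> (\<Sum>k\<in>K. A * D k)" by (rule sum_mono[OF ck])
    also have "\<dots> = A * infsum (\<lambda>j. \<Sum>k\<in>K. a j * (b (k - j))\<^sup>2) UNIV"
      using IS by (simp add: sum_distrib_left)
    also have "infsum (\<lambda>j. \<Sum>k\<in>K. a j * (b (k - j))\<^sup>2) UNIV \<le> infsum (\<lambda>j. a j * Bn) UNIV"
      apply (rule infsum_mono)
      using IS apply simp
       apply (rule summable_on_cmult_left[OF as])
      using inner a0 by (simp add: sum_distrib_left[symmetric] mult_left_mono)
    also have "infsum (\<lambda>j. a j * Bn) UNIV = A * Bn"
      unfolding A_def by (rule infsum_cmult_left) (use as in simp)
    finally show ?thesis using A0 by (simp add: mult_left_mono power2_eq_square mult.assoc)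
  qed
  have cs: "(\<lambda>k. (c k)\<^sup>2) summable_on UNIV"
    by (rule nonneg_bdd_above_summable_on) (use fin in \<open>auto intro!: bdd_aboveI\<close>)
  have "infsum (\<lambda>k. (c k)\<^sup>2) UNIV \<le> A\<^sup>2 * Bn"
    by (rule infsum_le_finite_sums[OF cs]) (use fin in auto)
  then show ?thesis using s1 cs unfolding A_def Bn_def c_def by auto
qed




lemma powr_sum_le:
  fixes a b s :: real
  assumes "a \<ge> 0" "b \<ge> 0" "s \<ge> 0"
  shows "(a + b) powr s \<le> 2 powr s * (a powr s + b powr s)"
proof -
  have "(a + b) powr s \<le> (2 * max a b) powr s"
    by (rule powr_mono2) (use assms in auto)
  also have "\<dots> = 2 powr s * (max a b) powr s" by (rule powr_mult)
  also have "(max a b) powr s \<le> a powr s + b powr s"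
    by (cases "a \<le> b") (auto simp: max_def)
  then have "2 powr s * (max a b) powr s \<le> 2 powr s * (a powr s + b powr s)"
    by (intro mult_left_mono) auto
  finally show ?thesis .
qed

lemma key_ineq:
  fixes x y wk F G s N :: real
  assumes x: "x \<ge> 1" and y: "y \<ge> 1" and s: "s \<ge> 0" and N: "N \<ge> 1"
    and wk: "wk \<ge> 0" "wk \<le> 2 powr s * (x powr s + y powr s)"
    and F: "F \<ge> 0" and G: "G \<ge> 0" and hi: "G \<noteq> 0 \<Longrightarrow> y > N"
  shows "wk * (F * G / (x * y)) \<le> (2 * 2 powr s / N) * (x powr s * F / x) * (y powr s * G)"
proof -
  define p where "p = x powr s"
  define q where "q = y powr s"
  have p1: "p \<ge> 1" unfolding p_def using x s by (rule ge_one_powr_ge_zero)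
  have q1: "q \<ge> 1" unfolding q_def using y s by (rule ge_one_powr_ge_zero)
  have Fx: "F / x \<ge> 0" using F x by simp
  have Gy: "G / y \<ge> 0" using G y by simp
  have g1: "G / y \<le> q * G / N"
  proof (cases "G = 0")
    case False
    then have yN: "y > N" by (rule hi)
    have "G / y \<le> G / N" using G N yN by (intro divide_left_mono) auto
    also have "\<dots> \<le> q * G / N" using q1 G N by (intro divide_right_mono) (auto simp: mult_le_cancel_right1)
    finally show ?thesis .
  qed simp
  have g2: "q * G / y \<le> q * G / N"
  proof (cases "G = 0")
    case False
    then have yN: "y > N" by (rule hi)
    show ?thesis using G N yN q1 by (intro divide_left_mono) auto
  qed simp
  have f1: "F / x \<le> p * F / x" using p1 F x by (intro divide_right_mono) (auto simp: mult_le_cancel_right1)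
  define u where "u = F / x"
  define v where "v = G / y"
  have u0: "u \<ge> 0" and v0: "v \<ge> 0" using Fx Gy unfolding u_def v_def .
  have g1': "v \<le> q * G / N" using g1 unfolding v_def .
  have g2': "q * v \<le> q * G / N" using g2 unfolding v_def by simp
  have f1': "u \<le> p * u" using f1 unfolding u_def by simp
  have "wk * (F * G / (x * y)) = wk * (u * v)" unfolding u_def v_def by simp
  also have "\<dots> \<le> (2 powr s * (p + q)) * (u * v)"
    using wk u0 v0 unfolding p_def q_def by (intro mult_right_mono) auto
  also have "\<dots> = 2 powr s * ((p * u) * v + u * (q * v))"
    by (simp add: algebra_simps)
  also have "\<dots> \<le> 2 powr s * ((p * u) * (q * G / N) + (p * u) * (q * G / N))"
  proof -
    have "(p * u) * v \<le> (p * u) * (q * G / N)"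
      by (rule mult_left_mono[OF g1']) (use p1 u0 in simp)
    moreover have "u * (q * v) \<le> (p * u) * (q * G / N)"
      by (rule mult_mono[OF f1' g2']) (use p1 u0 q1 v0 in auto)
    ultimately have "(p * u) * v + u * (q * v) \<le> (p * u) * (q * G / N) + (p * u) * (q * G / N)"
      by (rule add_mono)
    then show ?thesis by (rule mult_left_mono) simp
  qed
  also have "\<dots> = (2 * 2 powr s / N) * (p * F / x) * (q * G)"
    unfolding u_def by (simp add: algebra_simps)
  finally show ?thesis unfolding p_def q_def .
qed




definition T :: "real \<Rightarrow> (int \<Rightarrow> complex) \<Rightarrow> (int \<Rightarrow> complex) \<Rightarrow> int \<Rightarrow> int \<Rightarrow> complex" where
  "T t f g k j = exp (\<i> * of_real (3 * real_of_int k * real_of_int j * real_of_int (k - j) * t))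
          / of_int (j * (k - j)) * f j * g (k - j)"

lemma B2_eq: "B2 t f g k = (if k = 0 then 0 else (1/6) * infsum (T t f g k) {j. j \<noteq> 0 \<and> j \<noteq> k})"
  unfolding B2_def T_def by simp

lemma cmod_T: "cmod (T t f g k j) = cmod (f j) * cmod (g (k - j)) / (real_of_int \<bar>j\<bar> * real_of_int \<bar>k - j\<bar>)"
proof -
  have "cmod (of_int (j * (k - j))) = real_of_int \<bar>j * (k - j)\<bar>"
    by (simp only: norm_of_int of_int_abs)
  also have "\<dots> = real_of_int \<bar>j\<bar> * real_of_int \<bar>k - j\<bar>"
    by (simp only: abs_mult of_int_mult)
  finally have "cmod (of_int (j * (k - j))) = real_of_int \<bar>j\<bar> * real_of_int \<bar>k - j\<bar>" .
  then show ?thesis unfolding T_def norm_mult norm_divide norm_exp_i_times by simp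
qed

lemma h1: "(c::complex) * (a - b) * d = c * a * d - c * b * d" by (simp add: algebra_simps)
lemma h2: "(c::complex) * d * (a - b) = c * d * a - c * d * b" by (simp add: algebra_simps)

lemma bnd_g:
  assumes "W s g" "m \<noteq> 0" "s \<ge> 0"
  shows "cmod (g m) \<le> sqrt (nm s g)"
proof -
  have "(cmod (g m))\<^sup>2 \<le> real_of_int \<bar>m\<bar> powr (2 * s) * (cmod (g m))\<^sup>2"
  proof -
    have "1 \<le> real_of_int \<bar>m\<bar> powr (2 * s)" using assms(2,3) by (intro ge_one_powr_ge_zero) auto
    then show ?thesis by (simp add: mult_le_cancel_right1)
  qed
  also have "\<dots> \<le> nm s g"
    unfolding nm_def using finite_sum_le_infsum[of "\<lambda>k. real_of_int \<bar>k\<bar> powr (2 * s) * (cmod (g k))\<^sup>2" UNIV "{m}"]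
      assms(1) unfolding W_def by simp
  finally show ?thesis by (simp add: real_le_rsqrt)
qed

lemma al_ge: "j \<noteq> 0 \<Longrightarrow> s \<ge> 0 \<Longrightarrow> cmod (f j) / real_of_int \<bar>j\<bar> \<le> al s f j"
  unfolding al_def
  by (intro divide_right_mono) (auto simp: mult_le_cancel_right1 intro!: ge_one_powr_ge_zero)

lemma T_summable:
  assumes "W s f" "W s g" "s \<ge> 0"
  shows "(\<lambda>j. cmod (T t f g k j)) summable_on {j. j \<noteq> 0 \<and> j \<noteq> k} \<and> T t f g k summable_on {j. j \<noteq> 0 \<and> j \<noteq> k}"
proof -
  have as: "al s f summable_on UNIV" using al_l1[OF assms(1)] by simp
  have as2: "(\<lambda>j. al s f j * sqrt (nm s g)) summable_on {j. j \<noteq> 0 \<and> j \<noteq> k}"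
    by (rule summable_on_subset[OF summable_on_cmult_left[OF as]]) auto
  have pt: "cmod (T t f g k j) \<le> al s f j * sqrt (nm s g)" if "j \<in> {j. j \<noteq> 0 \<and> j \<noteq> k}" for j
  proof -
    have j: "j \<noteq> 0" "k - j \<noteq> 0" using that by auto
    have "cmod (T t f g k j) = (cmod (f j) / real_of_int \<bar>j\<bar>) * (cmod (g (k - j)) / real_of_int \<bar>k - j\<bar>)"
      unfolding cmod_T by simp
    also have "\<dots> \<le> al s f j * sqrt (nm s g)"
    proof (rule mult_mono)
      show "cmod (f j) / real_of_int \<bar>j\<bar> \<le> al s f j" by (rule al_ge[OF j(1) assms(3)])
      have kj1: "real_of_int \<bar>k - j\<bar> \<ge> 1" using j by linarith
      have "cmod (g (k - j)) / real_of_int \<bar>k - j\<bar> \<le> cmod (g (k - j))"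
        using kj1 by (simp add: divide_le_eq mult_le_cancel_left1)
      also have "\<dots> \<le> sqrt (nm s g)" by (rule bnd_g[OF assms(2) j(2) assms(3)])
      finally show "cmod (g (k - j)) / real_of_int \<bar>k - j\<bar> \<le> sqrt (nm s g)" .
    qed (auto simp: al_nonneg)
    finally show ?thesis .
  qed
  have n: "(\<lambda>j. cmod (T t f g k j)) summable_on {j. j \<noteq> 0 \<and> j \<noteq> k}"
    by (rule summable_on_comparison_test[OF as2 pt]) auto
  then show ?thesis by (simp add: abs_summable_summable)
qed

lemma infsum_diff':
  fixes f g :: "'a \<Rightarrow> 'b::{topological_ab_group_add, t2_space}"
  assumes "f summable_on A" "g summable_on A"
  shows "infsum (\<lambda>x. f x - g x) A = infsum f A - infsum g A"
proof -
  have "infsum (\<lambda>x. f x + - g x) A = infsum f A + infsum (\<lambda>x. - g x) A"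
    by (rule infsum_add[OF assms(1)]) (simp add: summable_on_uminus assms(2))
  then show ?thesis by (simp add: infsum_uminus)
qed

lemma W_diff: "W s f \<Longrightarrow> W s g \<Longrightarrow> W s (\<lambda>k. f k - g k)"
  using W_list_bound[of "[f, g]" s "\<lambda>k. f k - g k"] by (auto intro: norm_triangle_ineq4)

lemma W_add: "W s f \<Longrightarrow> W s g \<Longrightarrow> W s (\<lambda>k. f k + g k)"
  using W_list_bound[of "[f, g]" s "\<lambda>k. f k + g k"] by (auto intro: norm_triangle_ineq)

lemma B2_diff1:
  assumes "W s f" "W s f'" "W s g" "s \<ge> 0"
  shows "B2 t f g k - B2 t f' g k = B2 t (\<lambda>j. f j - f' j) g k"
proof (cases "k = 0")
  case False
  have e: "T t (\<lambda>j. f j - f' j) g k j = T t f g k j - T t f' g k j" for j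
    unfolding T_def by (rule h1)
  have "infsum (T t (\<lambda>j. f j - f' j) g k) {j. j \<noteq> 0 \<and> j \<noteq> k}
      = infsum (T t f g k) {j. j \<noteq> 0 \<and> j \<noteq> k} - infsum (T t f' g k) {j. j \<noteq> 0 \<and> j \<noteq> k}"
    unfolding e by (rule infsum_diff') (use T_summable assms in blast)+
  then show ?thesis using False unfolding B2_eq by (simp add: algebra_simps)
qed (simp add: B2_eq)

lemma B2_diff2:
  assumes "W s f" "W s g" "W s g'" "s \<ge> 0"
  shows "B2 t f g k - B2 t f g' k = B2 t f (\<lambda>j. g j - g' j) k"
proof (cases "k = 0")
  case False
  have e: "T t f (\<lambda>j. g j - g' j) k j = T t f g k j - T t f g' k j" for j
    unfolding T_def by (rule h2)
  have "infsum (T t f (\<lambda>j. g j - g' j) k) {j. j \<noteq> 0 \<and> j \<noteq> k}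
      = infsum (T t f g k) {j. j \<noteq> 0 \<and> j \<noteq> k} - infsum (T t f g' k) {j. j \<noteq> 0 \<and> j \<noteq> k}"
    unfolding e by (rule infsum_diff') (use T_summable assms in blast)+
  then show ?thesis using False unfolding B2_eq by (simp add: algebra_simps)
qed (simp add: B2_eq)

lemma B2_diff:
  assumes "W s x" "W s y" "W s x'" "W s y'" "s \<ge> 0"
  shows "B2 t x y k - B2 t x' y' k = B2 t (\<lambda>j. x j - x' j) y k + B2 t x' (\<lambda>j. y j - y' j) k"
proof -
  have "B2 t x y k - B2 t x' y' k = (B2 t x y k - B2 t x' y k) + (B2 t x' y k - B2 t x' y' k)" by simp
  also have "\<dots> = B2 t (\<lambda>j. x j - x' j) y k + B2 t x' (\<lambda>j. y j - y' j) k"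
    using B2_diff1[OF assms(1,3,2,5)] B2_diff2[OF assms(3,2,4,5)] by simp
  finally show ?thesis .
qed




definition cc :: "real \<Rightarrow> (int \<Rightarrow> complex) \<Rightarrow> (int \<Rightarrow> complex) \<Rightarrow> int \<Rightarrow> real" where
  "cc s x y k = infsum (\<lambda>j. al s x j * be s y (k - j)) UNIV"

lemma conv_al_be:
  assumes "W s x" "W s y" "s \<ge> 0"
  shows "(\<forall>k. (\<lambda>j. al s x j * be s y (k - j)) summable_on UNIV) \<and>
         (\<lambda>k. (cc s x y k)\<^sup>2) summable_on UNIV \<and>
         infsum (\<lambda>k. (cc s x y k)\<^sup>2) UNIV \<le> Zc * nm s x * nm s y"
proof -
  have a: "al s x summable_on UNIV" "infsum (al s x) UNIV \<le> sqrt (nm s x * Zc)"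
    using al_l1[OF assms(1)] by auto
  have b: "(\<lambda>j. (be s y j)\<^sup>2) summable_on UNIV" "infsum (\<lambda>j. (be s y j)\<^sup>2) UNIV = nm s y"
    using be_W[OF assms(2)] by auto
  have C: "(\<forall>k. (\<lambda>j. al s x j * be s y (k - j)) summable_on UNIV) \<and>
         (\<lambda>k. (cc s x y k)\<^sup>2) summable_on UNIV \<and>
         infsum (\<lambda>k. (cc s x y k)\<^sup>2) UNIV \<le> (infsum (al s x) UNIV)\<^sup>2 * nm s y"
    using conv[of "al s x" "be s y", OF al_nonneg be_nonneg a(1) b(1)] b(2) unfolding cc_def by simp
  have i0: "infsum (al s x) UNIV \<ge> 0" by (rule infsum_nonneg) (simp add: al_nonneg)
  have "(infsum (al s x) UNIV)\<^sup>2 \<le> (sqrt (nm s x * Zc))\<^sup>2"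
    using a(2) i0 by (simp add: power_mono)
  also have "\<dots> = nm s x * Zc" using nm_nonneg Zc_nonneg by simp
  finally have "(infsum (al s x) UNIV)\<^sup>2 * nm s y \<le> (nm s x * Zc) * nm s y"
    by (rule mult_right_mono) (rule nm_nonneg)
  then have "(infsum (al s x) UNIV)\<^sup>2 * nm s y \<le> Zc * nm s x * nm s y" by (simp add: mult_ac)
  then show ?thesis using C by (meson order_trans)
qed

lemma wk_le:
  assumes "s \<ge> 0"
  shows "real_of_int \<bar>k\<bar> powr s \<le> 2 powr s * (real_of_int \<bar>j\<bar> powr s + real_of_int \<bar>k - j\<bar> powr s)"
proof -
  have "real_of_int \<bar>k\<bar> powr s \<le> (real_of_int \<bar>j\<bar> + real_of_int \<bar>k - j\<bar>) powr s"
    by (rule powr_mono2) (use assms in auto)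
  also have "\<dots> \<le> 2 powr s * (real_of_int \<bar>j\<bar> powr s + real_of_int \<bar>k - j\<bar> powr s)"
    by (rule powr_sum_le) (use assms in auto)
  finally show ?thesis .
qed

lemma B2_pre:
  assumes "W s f" "W s g" "s \<ge> 0" "k \<noteq> 0"
  shows "real_of_int \<bar>k\<bar> powr s * cmod (B2 t f g k)
     \<le> (1/6) * infsum (\<lambda>j. real_of_int \<bar>k\<bar> powr s * cmod (T t f g k j)) {j. j \<noteq> 0 \<and> j \<noteq> k}"
proof -
  have TS: "(\<lambda>j. cmod (T t f g k j)) summable_on {j. j \<noteq> 0 \<and> j \<noteq> k}"
    using T_summable[OF assms(1-3)] by auto
  have "cmod (B2 t f g k) = (1/6) * cmod (infsum (T t f g k) {j. j \<noteq> 0 \<and> j \<noteq> k})"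
    using assms(4) unfolding B2_eq by (simp add: norm_mult)
  also have "\<dots> \<le> (1/6) * infsum (\<lambda>j. cmod (T t f g k j)) {j. j \<noteq> 0 \<and> j \<noteq> k}"
    using norm_infsum_bound[of "T t f g k"] TS by simp
  finally have "real_of_int \<bar>k\<bar> powr s * cmod (B2 t f g k) \<le>
     real_of_int \<bar>k\<bar> powr s * ((1/6) * infsum (\<lambda>j. cmod (T t f g k j)) {j. j \<noteq> 0 \<and> j \<noteq> k})"
    by (rule mult_left_mono) simp
  also have "\<dots> = (1/6) * infsum (\<lambda>j. real_of_int \<bar>k\<bar> powr s * cmod (T t f g k j)) {j. j \<noteq> 0 \<and> j \<noteq> k}"
    using infsum_cmult_right[of "real_of_int \<bar>k\<bar> powr s" "\<lambda>j. cmod (T t f g k j)"] TS by simp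
  finally show ?thesis .
qed

lemma B2_pt_ghi:
  assumes "W s f" "W s g" "s \<ge> 0" "N \<ge> 1" and hi: "\<And>j. \<bar>j\<bar> \<le> int N \<Longrightarrow> g j = 0"
  shows "real_of_int \<bar>k\<bar> powr s * cmod (B2 t f g k) \<le> (2 * 2 powr s / real N) / 6 * cc s f g k"
proof (cases "k = 0")
  case True
  have "cc s f g k \<ge> 0" unfolding cc_def by (rule infsum_nonneg) (simp add: al_nonneg be_nonneg)
  then show ?thesis using True by (simp add: B2_eq)
next
  case False
  define M where "M = 2 * 2 powr s / real N"
  have M0: "M \<ge> 0" unfolding M_def by simp
  have TS: "(\<lambda>j. cmod (T t f g k j)) summable_on {j. j \<noteq> 0 \<and> j \<noteq> k}"
    using T_summable[OF assms(1-3)] by auto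
  have CS: "(\<lambda>j. al s f j * be s g (k - j)) summable_on UNIV"
    using conv_al_be[OF assms(1-3)] by auto
  have "infsum (\<lambda>j. real_of_int \<bar>k\<bar> powr s * cmod (T t f g k j)) {j. j \<noteq> 0 \<and> j \<noteq> k}
      \<le> infsum (\<lambda>j. M * (al s f j * be s g (k - j))) UNIV"
  proof (rule infsum_mono_neutral)
    show "(\<lambda>j. real_of_int \<bar>k\<bar> powr s * cmod (T t f g k j)) summable_on {j. j \<noteq> 0 \<and> j \<noteq> k}"
      by (rule summable_on_cmult_right[OF TS])
    show "(\<lambda>j. M * (al s f j * be s g (k - j))) summable_on UNIV"
      by (rule summable_on_cmult_right[OF CS])
  next
    fix j assume "j \<in> {j. j \<noteq> 0 \<and> j \<noteq> k} \<inter> UNIV"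
    then have j: "j \<noteq> 0" "k - j \<noteq> 0" by auto
    have "real_of_int \<bar>k\<bar> powr s * (cmod (f j) * cmod (g (k - j)) / (real_of_int \<bar>j\<bar> * real_of_int \<bar>k - j\<bar>))
       \<le> M * (real_of_int \<bar>j\<bar> powr s * cmod (f j) / real_of_int \<bar>j\<bar>) * (real_of_int \<bar>k - j\<bar> powr s * cmod (g (k - j)))"
      unfolding M_def
    proof (rule key_ineq)
      show "real_of_int \<bar>k\<bar> powr s \<le> 2 powr s * (real_of_int \<bar>j\<bar> powr s + real_of_int \<bar>k - j\<bar> powr s)"
        by (rule wk_le[OF assms(3)])
      show "cmod (g (k - j)) \<noteq> 0 \<Longrightarrow> real N < real_of_int \<bar>k - j\<bar>"
      proof -
        assume "cmod (g (k - j)) \<noteq> 0"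
        then have "\<not> \<bar>k - j\<bar> \<le> int N" using hi[of "k - j"] by auto
        then have "int N < \<bar>k - j\<bar>" by simp
        then have "real_of_int (int N) < real_of_int \<bar>k - j\<bar>" by (simp only: of_int_less_iff)
        then show ?thesis by simp
      qed
    qed (use j assms(3,4) in auto)
    then show "real_of_int \<bar>k\<bar> powr s * cmod (T t f g k j) \<le> M * (al s f j * be s g (k - j))"
      unfolding cmod_T al_def be_def by (simp add: mult.assoc)
  qed (use M0 al_nonneg be_nonneg in auto)
  also have "\<dots> = M * cc s f g k"
    unfolding cc_def by (rule infsum_cmult_right) (use CS in simp)
  finally show ?thesis using B2_pre[OF assms(1-3) False, of t] unfolding M_def by simp
qed

lemma B2_pt_fhi:
  assumes "W s f" "W s g" "s \<ge> 0" "N \<ge> 1" and hi: "\<And>j. \<bar>j\<bar> \<le> int N \<Longrightarrow> f j = 0"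
  shows "real_of_int \<bar>k\<bar> powr s * cmod (B2 t f g k) \<le> (2 * 2 powr s / real N) / 6 * cc s g f k"
proof (cases "k = 0")
  case True
  have "cc s g f k \<ge> 0" unfolding cc_def by (rule infsum_nonneg) (simp add: al_nonneg be_nonneg)
  then show ?thesis using True by (simp add: B2_eq)
next
  case False
  define M where "M = 2 * 2 powr s / real N"
  have M0: "M \<ge> 0" unfolding M_def by simp
  have TS: "(\<lambda>j. cmod (T t f g k j)) summable_on {j. j \<noteq> 0 \<and> j \<noteq> k}"
    using T_summable[OF assms(1-3)] by auto
  have CS0: "(\<lambda>i. al s g i * be s f (k - i)) summable_on UNIV"
    using conv_al_be[OF assms(2,1,3)] by auto
  have bij: "bij_betw (\<lambda>j. k - j) UNIV UNIV"
    by (rule bij_betwI[where g="\<lambda>j. k - j"]) auto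
  have CS: "(\<lambda>j. al s g (k - j) * be s f j) summable_on UNIV"
    using summable_on_reindex_bij_betw[OF bij, of "\<lambda>i. al s g i * be s f (k - i)"] CS0 by simp
  have CE: "infsum (\<lambda>j. al s g (k - j) * be s f j) UNIV = cc s g f k"
    using infsum_reindex_bij_betw[OF bij, of "\<lambda>i. al s g i * be s f (k - i)"] unfolding cc_def by simp
  have "infsum (\<lambda>j. real_of_int \<bar>k\<bar> powr s * cmod (T t f g k j)) {j. j \<noteq> 0 \<and> j \<noteq> k}
      \<le> infsum (\<lambda>j. M * (al s g (k - j) * be s f j)) UNIV"
  proof (rule infsum_mono_neutral)
    show "(\<lambda>j. real_of_int \<bar>k\<bar> powr s * cmod (T t f g k j)) summable_on {j. j \<noteq> 0 \<and> j \<noteq> k}"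
      by (rule summable_on_cmult_right[OF TS])
    show "(\<lambda>j. M * (al s g (k - j) * be s f j)) summable_on UNIV"
      by (rule summable_on_cmult_right[OF CS])
  next
    fix j assume "j \<in> {j. j \<noteq> 0 \<and> j \<noteq> k} \<inter> UNIV"
    then have j: "j \<noteq> 0" "k - j \<noteq> 0" by auto
    have "real_of_int \<bar>k\<bar> powr s * (cmod (g (k - j)) * cmod (f j) / (real_of_int \<bar>k - j\<bar> * real_of_int \<bar>j\<bar>))
       \<le> M * (real_of_int \<bar>k - j\<bar> powr s * cmod (g (k - j)) / real_of_int \<bar>k - j\<bar>) * (real_of_int \<bar>j\<bar> powr s * cmod (f j))"
      unfolding M_def
    proof (rule key_ineq)
      show "real_of_int \<bar>k\<bar> powr s \<le> 2 powr s * (real_of_int \<bar>k - j\<bar> powr s + real_of_int \<bar>j\<bar> powr s)"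
        using wk_le[OF assms(3), of k j] by (simp add: add.commute)
      show "cmod (f j) \<noteq> 0 \<Longrightarrow> real N < real_of_int \<bar>j\<bar>"
      proof -
        assume "cmod (f j) \<noteq> 0"
        then have "\<not> \<bar>j\<bar> \<le> int N" using hi[of "j"] by auto
        then have "int N < \<bar>j\<bar>" by simp
        then have "real_of_int (int N) < real_of_int \<bar>j\<bar>" by (simp only: of_int_less_iff)
        then show ?thesis by simp
      qed
    qed (use j assms(3,4) in auto)
    then show "real_of_int \<bar>k\<bar> powr s * cmod (T t f g k j) \<le> M * (al s g (k - j) * be s f j)"
      unfolding cmod_T al_def be_def by (simp add: mult.assoc mult.commute mult.left_commute)
  qed (use M0 al_nonneg be_nonneg in auto)
  also have "\<dots> = M * cc s g f k"
    using infsum_cmult_right[of M "\<lambda>j. al s g (k - j) * be s f j" UNIV] CS CE by simp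
  finally show ?thesis using B2_pre[OF assms(1-3) False, of t] unfolding M_def by simp
qed




lemma core_gen:
  assumes "W s x" "W s y" "s \<ge> 0" "c \<ge> 0"
    and P: "\<And>k. real_of_int \<bar>k\<bar> powr s * cmod (h k) \<le> c * cc s x y k"
  shows "W s h \<and> nm s h \<le> c\<^sup>2 * Zc * nm s x * nm s y"
proof -
  have C: "(\<lambda>k. (cc s x y k)\<^sup>2) summable_on UNIV" "infsum (\<lambda>k. (cc s x y k)\<^sup>2) UNIV \<le> Zc * nm s x * nm s y"
    using conv_al_be[OF assms(1-3)] by auto
  have pt: "real_of_int \<bar>k\<bar> powr (2 * s) * (cmod (h k))\<^sup>2 \<le> c\<^sup>2 * (cc s x y k)\<^sup>2" for k
  proof -
    have "real_of_int \<bar>k\<bar> powr (2 * s) * (cmod (h k))\<^sup>2 = (real_of_int \<bar>k\<bar> powr s * cmod (h k))\<^sup>2"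
      by (simp add: power_mult_distrib powr_sq)
    also have "\<dots> \<le> (c * cc s x y k)\<^sup>2"
      by (rule power_mono[OF P]) simp
    finally show ?thesis by (simp add: power_mult_distrib)
  qed
  have S: "(\<lambda>k. c\<^sup>2 * (cc s x y k)\<^sup>2) summable_on UNIV" by (rule summable_on_cmult_right[OF C(1)])
  have Wh: "(\<lambda>k. real_of_int \<bar>k\<bar> powr (2 * s) * (cmod (h k))\<^sup>2) summable_on UNIV"
    by (rule summable_on_comparison_test[OF S pt]) simp
  have "nm s h \<le> infsum (\<lambda>k. c\<^sup>2 * (cc s x y k)\<^sup>2) UNIV"
    unfolding nm_def by (rule infsum_mono[OF Wh S pt])
  also have "\<dots> = c\<^sup>2 * infsum (\<lambda>k. (cc s x y k)\<^sup>2) UNIV"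
    by (rule infsum_cmult_right) (use C in simp)
  also have "\<dots> \<le> c\<^sup>2 * (Zc * nm s x * nm s y)"
    by (rule mult_left_mono[OF C(2)]) simp
  finally show ?thesis using Wh unfolding W_def by (simp add: mult_ac)
qed

definition Kc :: "real \<Rightarrow> real" where "Kc s = (2 * 2 powr s / 6)\<^sup>2 * Zc"

lemma Kc_nonneg: "Kc s \<ge> 0" unfolding Kc_def using Zc_nonneg by simp

lemma core:
  assumes "s \<ge> 0" "N \<ge> 1" "W s f" "W s g"
    and hi: "(\<forall>j. \<bar>j\<bar> \<le> int N \<longrightarrow> f j = 0) \<or> (\<forall>j. \<bar>j\<bar> \<le> int N \<longrightarrow> g j = 0)"
  shows "W s (B2 t f g) \<and> nm s (B2 t f g) \<le> Kc s / (real N)\<^sup>2 * (nm s f * nm s g)"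
proof -
  define c where "c = (2 * 2 powr s / real N) / 6"
  have c0: "c \<ge> 0" unfolding c_def by simp
  have cK: "c\<^sup>2 * Zc = Kc s / (real N)\<^sup>2" unfolding c_def Kc_def by (simp add: power_divide)
  from hi show ?thesis
  proof
    assume "\<forall>j. \<bar>j\<bar> \<le> int N \<longrightarrow> f j = 0"
    then have P: "real_of_int \<bar>k\<bar> powr s * cmod (B2 t f g k) \<le> c * cc s g f k" for k
      unfolding c_def using B2_pt_fhi[OF assms(3,4,1,2)] by blast
    have e: "c\<^sup>2 * Zc * nm s g * nm s f = Kc s / (real N)\<^sup>2 * (nm s f * nm s g)"
      by (simp only: cK[symmetric] mult_ac)
    show ?thesis using core_gen[OF assms(4,3,1) c0 P] unfolding e .
  next
    assume "\<forall>j. \<bar>j\<bar> \<le> int N \<longrightarrow> g j = 0"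
    then have P: "real_of_int \<bar>k\<bar> powr s * cmod (B2 t f g k) \<le> c * cc s f g k" for k
      unfolding c_def using B2_pt_ghi[OF assms(3,4,1,2)] by blast
    have e: "c\<^sup>2 * Zc * nm s f * nm s g = Kc s / (real N)\<^sup>2 * (nm s f * nm s g)"
      by (simp only: cK[symmetric] mult_ac)
    show ?thesis using core_gen[OF assms(3,4,1) c0 P] unfolding e .
  qed
qed

definition R :: "(int \<Rightarrow> complex) \<Rightarrow> bool" where
  "R f \<longleftrightarrow> f 0 = 0 \<and> (\<forall>k. cnj (f k) = f (- k))"

lemma in_Hs_iff: "in_Hs s f \<longleftrightarrow> R f \<and> W s f"
  unfolding in_Hs_def R_def W_def
  by (subst summable_on_cong_neutral[where T=UNIV]) auto

lemma T_cnj: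
  assumes "R f" "R g"
  shows "cnj (T t f g k j) = T t f g (- k) (- j)"
proof -
  define x where "x = 3 * real_of_int k * real_of_int j * real_of_int (k - j) * t"
  have ex: "cnj (exp (\<i> * complex_of_real x)) = exp (\<i> * complex_of_real (- x))"
    by (simp add: exp_cnj)
  have x2: "3 * real_of_int (- k) * real_of_int (- j) * real_of_int (- k - - j) * t = - x"
    unfolding x_def by (simp add: algebra_simps)
  have d: "(- j) * (- k - - j) = j * (k - j)" by (simp add: algebra_simps)
  have fj: "f (- j) = cnj (f j)" and gj: "g (- k - - j) = cnj (g (k - j))"
    using assms unfolding R_def by (metis, metis minus_diff_eq diff_minus_eq_add uminus_add_conv_diff)
  show ?thesis unfolding T_def x2 d fj gj x_def[symmetric]
    by (simp add: ex)
qed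

lemma B2_R:
  assumes "R f" "R g"
  shows "R (B2 t f g)"
  unfolding R_def
proof (intro conjI allI)
  show "B2 t f g 0 = 0" by (simp add: B2_eq)
  fix k
  show "cnj (B2 t f g k) = B2 t f g (- k)"
  proof (cases "k = 0")
    case False
    have bij: "bij_betw uminus {j. j \<noteq> 0 \<and> j \<noteq> k} {j. j \<noteq> 0 \<and> j \<noteq> - k}"
      by (rule bij_betwI[where g=uminus]) auto
    have "cnj (infsum (T t f g k) {j. j \<noteq> 0 \<and> j \<noteq> k}) = infsum (\<lambda>j. cnj (T t f g k j)) {j. j \<noteq> 0 \<and> j \<noteq> k}"
      by simp
    also have "\<dots> = infsum (\<lambda>j. T t f g (- k) (- j)) {j. j \<noteq> 0 \<and> j \<noteq> k}"
      using T_cnj[OF assms] by simp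
    also have "\<dots> = infsum (T t f g (- k)) {j. j \<noteq> 0 \<and> j \<noteq> - k}"
      by (rule infsum_reindex_bij_betw[OF bij])
    finally show ?thesis using False unfolding B2_eq by simp
  qed (simp add: B2_eq)
qed

lemma R_P: "R f \<Longrightarrow> R (projP N f)" unfolding R_def projP_def by auto
lemma R_Q: "R f \<Longrightarrow> R (projQ N f)" unfolding R_def projQ_def by auto
lemma R_add: "R f \<Longrightarrow> R g \<Longrightarrow> R (\<lambda>k. f k + g k)" unfolding R_def by auto
lemma R_diff: "R f \<Longrightarrow> R g \<Longrightarrow> R (\<lambda>k. f k - g k)" unfolding R_def by auto

lemma W_P: "W s f \<Longrightarrow> W s (projP N f) \<and> nm s (projP N f) \<le> nm s f"
  by (rule W_le) (auto simp: projP_def)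
lemma W_Q: "W s f \<Longrightarrow> W s (projQ N f) \<and> nm s (projQ N f) \<le> nm s f"
  by (rule W_le) (auto simp: projQ_def)




abbreviation hiN :: "nat \<Rightarrow> (int \<Rightarrow> complex) \<Rightarrow> bool" where
  "hiN N f \<equiv> (\<forall>j. \<bar>j\<bar> \<le> int N \<longrightarrow> f j = 0)"

lemma core':
  assumes "s \<ge> 0" "N \<ge> 1" "W s x" "W s y" "nm s x \<le> X" "nm s y \<le> Y"
    and hi: "hiN N x \<or> hiN N y"
  shows "W s (B2 t x y) \<and> nm s (B2 t x y) \<le> Kc s / (real N)\<^sup>2 * (X * Y)"
proof -
  have c: "W s (B2 t x y) \<and> nm s (B2 t x y) \<le> Kc s / (real N)\<^sup>2 * (nm s x * nm s y)"
    by (rule core[OF assms(1-4) hi])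
  have "nm s x * nm s y \<le> X * Y"
    by (rule mult_mono) (use assms nm_nonneg in \<open>auto intro: order_trans\<close>)
  then have "Kc s / (real N)\<^sup>2 * (nm s x * nm s y) \<le> Kc s / (real N)\<^sup>2 * (X * Y)"
    by (rule mult_left_mono) (simp add: Kc_nonneg)
  then show ?thesis using c by simp
qed

lemma hiQ: "hiN N (projQ N f)" unfolding projQ_def by auto
lemma hiQd: "hiN N (\<lambda>k. projQ N f k - projQ N g k)" unfolding projQ_def by auto

definition compQ :: "nat \<Rightarrow> real \<Rightarrow> (int \<Rightarrow> complex) \<Rightarrow> (int \<Rightarrow> complex) \<Rightarrow> (int \<Rightarrow> complex) \<Rightarrow> int \<Rightarrow> complex" where
  "compQ N t u v x = (\<lambda>k. B2 t (projP N u) (projQ N v) k + B2 t (projQ N u) v k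
          - (B2 t (projP N x) (projQ N x) k + B2 t (projQ N x) x k))"

lemma BQ_comp: "fst (BQ N t u v) = compQ N t u v u" "snd (BQ N t u v) = compQ N t u v v"
  unfolding BQ_def compQ_def by simp_all

lemma tri4: "cmod (a + b - (c + d)) \<le> cmod a + cmod b + cmod c + cmod d"
  using norm_triangle_ineq[of a b] norm_triangle_ineq[of c d] norm_triangle_ineq4[of "a+b" "c+d"]
  by linarith

lemma comp_bound:
  assumes s: "s \<ge> 0" and N: "N \<ge> 1" and W: "W s u" "W s v" "W s x"
    and b: "nm s u \<le> Uq" "nm s v \<le> Uq" "nm s x \<le> Uq"
  shows "W s (compQ N t u v x) \<and> nm s (compQ N t u v x) \<le> 16 * (Kc s / (real N)\<^sup>2) * Uq\<^sup>2"
proof -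
  define E where "E = Kc s / (real N)\<^sup>2"
  note P = W_P[of s _ N] and Q = W_Q[of s _ N]
  have PQ: "W s (projP N f) \<and> nm s (projP N f) \<le> Uq" "W s (projQ N f) \<and> nm s (projQ N f) \<le> Uq"
    if "W s f" "nm s f \<le> Uq" for f
    using P[OF that(1)] Q[OF that(1)] that(2) by auto
  have t1: "W s (B2 t (projP N u) (projQ N v)) \<and> nm s (B2 t (projP N u) (projQ N v)) \<le> E * (Uq * Uq)"
    unfolding E_def by (rule core'[OF s N]) (use PQ[OF W(1) b(1)] PQ[OF W(2) b(2)] hiQ in auto)
  have t2: "W s (B2 t (projQ N u) v) \<and> nm s (B2 t (projQ N u) v) \<le> E * (Uq * Uq)"
    unfolding E_def by (rule core'[OF s N]) (use PQ[OF W(1) b(1)] W b hiQ in auto)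
  have t3: "W s (B2 t (projP N x) (projQ N x)) \<and> nm s (B2 t (projP N x) (projQ N x)) \<le> E * (Uq * Uq)"
    unfolding E_def by (rule core'[OF s N]) (use PQ[OF W(3) b(3)] hiQ in auto)
  have t4: "W s (B2 t (projQ N x) x) \<and> nm s (B2 t (projQ N x) x) \<le> E * (Uq * Uq)"
    unfolding E_def by (rule core'[OF s N]) (use PQ[OF W(3) b(3)] W b hiQ in auto)
  have L: "W s (compQ N t u v x) \<and> nm s (compQ N t u v x) \<le> real (length
      [B2 t (projP N u) (projQ N v), B2 t (projQ N u) v, B2 t (projP N x) (projQ N x), B2 t (projQ N x) x])
      * sum_list (map (nm s) [B2 t (projP N u) (projQ N v), B2 t (projQ N u) v, B2 t (projP N x) (projQ N x), B2 t (projQ N x) x])"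
    by (rule W_list_bound) (use t1 t2 t3 t4 in \<open>auto simp: compQ_def intro: order_trans[OF tri4]\<close>)
  then show ?thesis using t1 t2 t3 t4 unfolding E_def[symmetric] by (simp add: power2_eq_square)
qed

lemma comp_diff_eq:
  assumes s: "s \<ge> 0" and W: "W s u" "W s v" "W s x" "W s u'" "W s v'" "W s x'"
  shows "compQ N t u v x k - compQ N t u' v' x' k =
     (B2 t (\<lambda>j. projP N u j - projP N u' j) (projQ N v) k + B2 t (projP N u') (\<lambda>j. projQ N v j - projQ N v' j) k)
   + (B2 t (\<lambda>j. projQ N u j - projQ N u' j) v k + B2 t (projQ N u') (\<lambda>j. v j - v' j) k)
   - ((B2 t (\<lambda>j. projP N x j - projP N x' j) (projQ N x) k + B2 t (projP N x') (\<lambda>j. projQ N x j - projQ N x' j) k)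
   + (B2 t (\<lambda>j. projQ N x j - projQ N x' j) x k + B2 t (projQ N x') (\<lambda>j. x j - x' j) k))"
proof -
  have P: "W s (projP N f)" "W s (projQ N f)" if "W s f" for f using W_P[OF that] W_Q[OF that] by auto
  have e1: "B2 t (projP N u) (projQ N v) k - B2 t (projP N u') (projQ N v') k =
     B2 t (\<lambda>j. projP N u j - projP N u' j) (projQ N v) k + B2 t (projP N u') (\<lambda>j. projQ N v j - projQ N v' j) k"
    by (rule B2_diff[OF P(1)[OF W(1)] P(2)[OF W(2)] P(1)[OF W(4)] P(2)[OF W(5)] s])
  have e2: "B2 t (projQ N u) v k - B2 t (projQ N u') v' k =
     B2 t (\<lambda>j. projQ N u j - projQ N u' j) v k + B2 t (projQ N u') (\<lambda>j. v j - v' j) k"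
    by (rule B2_diff[OF P(2)[OF W(1)] W(2) P(2)[OF W(4)] W(5) s])
  have e3: "B2 t (projP N x) (projQ N x) k - B2 t (projP N x') (projQ N x') k =
     B2 t (\<lambda>j. projP N x j - projP N x' j) (projQ N x) k + B2 t (projP N x') (\<lambda>j. projQ N x j - projQ N x' j) k"
    by (rule B2_diff[OF P(1)[OF W(3)] P(2)[OF W(3)] P(1)[OF W(6)] P(2)[OF W(6)] s])
  have e4: "B2 t (projQ N x) x k - B2 t (projQ N x') x' k =
     B2 t (\<lambda>j. projQ N x j - projQ N x' j) x k + B2 t (projQ N x') (\<lambda>j. x j - x' j) k"
    by (rule B2_diff[OF P(2)[OF W(3)] W(3) P(2)[OF W(6)] W(6) s])
  show ?thesis unfolding compQ_def e1[symmetric] e2[symmetric] e3[symmetric] e4[symmetric]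
    by (simp add: algebra_simps)
qed

lemma tri8: "cmod ((a1 + b1) + (a2 + b2) - ((a3 + b3) + (a4 + b4)))
   \<le> cmod a1 + cmod b1 + cmod a2 + cmod b2 + cmod a3 + cmod b3 + cmod a4 + cmod b4"
  using tri4[of "a1 + b1" "a2 + b2" "a3 + b3" "a4 + b4"]
    norm_triangle_ineq[of a1 b1] norm_triangle_ineq[of a2 b2] norm_triangle_ineq[of a3 b3] norm_triangle_ineq[of a4 b4]
  by linarith




lemma dPQ:
  assumes "W s u" "W s u'"
  shows "W s (\<lambda>j. projP N u j - projP N u' j) \<and> nm s (\<lambda>j. projP N u j - projP N u' j) \<le> nm s (\<lambda>j. u j - u' j)"
        "W s (\<lambda>j. projQ N u j - projQ N u' j) \<and> nm s (\<lambda>j. projQ N u j - projQ N u' j) \<le> nm s (\<lambda>j. u j - u' j)"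
  by (rule W_le[OF W_diff[OF assms]]; auto simp: projP_def projQ_def)+

lemma comp_diff_bound:
  assumes s: "s \<ge> 0" and N: "N \<ge> 1" and W: "W s u" "W s v" "W s x" "W s u'" "W s v'" "W s x'"
    and d: "nm s (\<lambda>j. u j - u' j) \<le> Dq" "nm s (\<lambda>j. v j - v' j) \<le> Dq" "nm s (\<lambda>j. x j - x' j) \<le> Dq"
    and b: "nm s u \<le> Vq" "nm s v \<le> Vq" "nm s x \<le> Vq" "nm s u' \<le> Vq" "nm s v' \<le> Vq" "nm s x' \<le> Vq"
  shows "W s (\<lambda>k. compQ N t u v x k - compQ N t u' v' x' k) \<and>
    nm s (\<lambda>k. compQ N t u v x k - compQ N t u' v' x' k) \<le> 64 * (Kc s / (real N)\<^sup>2) * (Dq * Vq)"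
proof -
  define E where "E = Kc s / (real N)\<^sup>2"
  have PQ: "W s (projP N f) \<and> nm s (projP N f) \<le> Vq" "W s (projQ N f) \<and> nm s (projQ N f) \<le> Vq"
    if "W s f" "nm s f \<le> Vq" for f
    using W_P[OF that(1), of N] W_Q[OF that(1), of N] that(2) by auto
  have DPQ: "W s (\<lambda>j. projP N f j - projP N f' j) \<and> nm s (\<lambda>j. projP N f j - projP N f' j) \<le> Dq"
            "W s (\<lambda>j. projQ N f j - projQ N f' j) \<and> nm s (\<lambda>j. projQ N f j - projQ N f' j) \<le> Dq"
            "W s (\<lambda>j. f j - f' j) \<and> nm s (\<lambda>j. f j - f' j) \<le> Dq"
    if "W s f" "W s f'" "nm s (\<lambda>j. f j - f' j) \<le> Dq" for f f'
    using dPQ[OF that(1,2), of N] that(3) W_diff[OF that(1,2)] by auto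
  have cm: "E * (Vq * Dq) = E * (Dq * Vq)" by (simp add: mult_ac)
  have p1: "W s (B2 t (\<lambda>j. projP N u j - projP N u' j) (projQ N v)) \<and> nm s (B2 t (\<lambda>j. projP N u j - projP N u' j) (projQ N v)) \<le> E * (Dq * Vq)"
    unfolding E_def by (rule core'[OF s N]) (use DPQ[OF W(1,4) d(1)] PQ[OF W(2) b(2)] hiQ in auto)
  have q1: "W s (B2 t (projP N u') (\<lambda>j. projQ N v j - projQ N v' j)) \<and> nm s (B2 t (projP N u') (\<lambda>j. projQ N v j - projQ N v' j)) \<le> E * (Dq * Vq)"
    unfolding cm[symmetric] unfolding E_def by (rule core'[OF s N]) (use DPQ[OF W(2,5) d(2)] PQ[OF W(4) b(4)] hiQd in auto)
  have p2: "W s (B2 t (\<lambda>j. projQ N u j - projQ N u' j) v) \<and> nm s (B2 t (\<lambda>j. projQ N u j - projQ N u' j) v) \<le> E * (Dq * Vq)"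
    unfolding E_def by (rule core'[OF s N]) (use DPQ[OF W(1,4) d(1)] W b hiQd in auto)
  have q2: "W s (B2 t (projQ N u') (\<lambda>j. v j - v' j)) \<and> nm s (B2 t (projQ N u') (\<lambda>j. v j - v' j)) \<le> E * (Dq * Vq)"
    unfolding cm[symmetric] unfolding E_def by (rule core'[OF s N]) (use DPQ[OF W(2,5) d(2)] PQ[OF W(4) b(4)] hiQ in auto)
  have p3: "W s (B2 t (\<lambda>j. projP N x j - projP N x' j) (projQ N x)) \<and> nm s (B2 t (\<lambda>j. projP N x j - projP N x' j) (projQ N x)) \<le> E * (Dq * Vq)"
    unfolding E_def by (rule core'[OF s N]) (use DPQ[OF W(3,6) d(3)] PQ[OF W(3) b(3)] hiQ in auto)
  have q3: "W s (B2 t (projP N x') (\<lambda>j. projQ N x j - projQ N x' j)) \<and> nm s (B2 t (projP N x') (\<lambda>j. projQ N x j - projQ N x' j)) \<le> E * (Dq * Vq)"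
    unfolding cm[symmetric] unfolding E_def by (rule core'[OF s N]) (use DPQ[OF W(3,6) d(3)] PQ[OF W(6) b(6)] hiQd in auto)
  have p4: "W s (B2 t (\<lambda>j. projQ N x j - projQ N x' j) x) \<and> nm s (B2 t (\<lambda>j. projQ N x j - projQ N x' j) x) \<le> E * (Dq * Vq)"
    unfolding E_def by (rule core'[OF s N]) (use DPQ[OF W(3,6) d(3)] W b hiQd in auto)
  have q4: "W s (B2 t (projQ N x') (\<lambda>j. x j - x' j)) \<and> nm s (B2 t (projQ N x') (\<lambda>j. x j - x' j)) \<le> E * (Dq * Vq)"
    unfolding cm[symmetric] unfolding E_def by (rule core'[OF s N]) (use DPQ[OF W(3,6) d(3)] PQ[OF W(6) b(6)] hiQ in auto)
  let ?gs = "[B2 t (\<lambda>j. projP N u j - projP N u' j) (projQ N v), B2 t (projP N u') (\<lambda>j. projQ N v j - projQ N v' j),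
     B2 t (\<lambda>j. projQ N u j - projQ N u' j) v, B2 t (projQ N u') (\<lambda>j. v j - v' j),
     B2 t (\<lambda>j. projP N x j - projP N x' j) (projQ N x), B2 t (projP N x') (\<lambda>j. projQ N x j - projQ N x' j),
     B2 t (\<lambda>j. projQ N x j - projQ N x' j) x, B2 t (projQ N x') (\<lambda>j. x j - x' j)]"
  have L: "W s (\<lambda>k. compQ N t u v x k - compQ N t u' v' x' k) \<and>
      nm s (\<lambda>k. compQ N t u v x k - compQ N t u' v' x' k) \<le> real (length ?gs) * sum_list (map (nm s) ?gs)"
  proof (rule W_list_bound)
    show "\<And>g. g \<in> set ?gs \<Longrightarrow> W s g" using p1 q1 p2 q2 p3 q3 p4 q4 by auto
    fix k
    show "cmod (compQ N t u v x k - compQ N t u' v' x' k) \<le> sum_list (map (\<lambda>g. cmod (g k)) ?gs)"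
      unfolding comp_diff_eq[OF s W] using tri8 by (simp add: add.assoc)
  qed
  have "sum_list (map (nm s) ?gs) \<le> 8 * (E * (Dq * Vq))"
    using p1 q1 p2 q2 p3 q3 p4 q4 by simp
  then have "real (length ?gs) * sum_list (map (nm s) ?gs) \<le> 64 * E * (Dq * Vq)" by simp
  then show ?thesis using L unfolding E_def by simp
qed




lemma comp_R: "R u \<Longrightarrow> R v \<Longrightarrow> R x \<Longrightarrow> R (compQ N t u v x)"
  unfolding compQ_def
  by (intro R_diff R_add B2_R R_P R_Q)

theorem lemma6p2:
  fixes s :: real
  assumes "s \<ge> 0"
  shows "\<exists>C. \<forall>(N::nat) (t::real) u v u' v'.
      N \<ge> 1 \<longrightarrow> in_Hs s u \<longrightarrow> in_Hs s v \<longrightarrow> in_Hs s u' \<longrightarrow> in_Hs s v' \<longrightarrow>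
      in_Hs s (fst (BQ N t u v)) \<and> in_Hs s (snd (BQ N t u v)) \<and>
      pair_norm s (fst (BQ N t u v)) (snd (BQ N t u v))
        \<le> C * (1 / real N) * (pair_norm s u v)\<^sup>2 \<and>
      pair_norm s (\<lambda>k. fst (BQ N t u v) k - fst (BQ N t u' v') k)
                  (\<lambda>k. snd (BQ N t u v) k - snd (BQ N t u' v') k)
        \<le> C * (1 / real N) * pair_norm s (\<lambda>k. u k - u' k) (\<lambda>k. v k - v' k)
            * (pair_norm s u v + pair_norm s u' v')"
proof (intro exI allI impI conjI)
  define C where "C = sqrt (128 * Kc s)"
  fix N :: nat and t :: real and u v u' v'
  assume N: "N \<ge> 1" and hu: "in_Hs s u" and hv: "in_Hs s v" and hu': "in_Hs s u'" and hv': "in_Hs s v'"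
  note s = assms
  have Ru: "R u" and Wu: "W s u" using hu in_Hs_iff by auto
  have Rv: "R v" and Wv: "W s v" using hv in_Hs_iff by auto
  have Ru': "R u'" and Wu': "W s u'" using hu' in_Hs_iff by auto
  have Rv': "R v'" and Wv': "W s v'" using hv' in_Hs_iff by auto
  define U where "U = nm s u + nm s v"
  define U' where "U' = nm s u' + nm s v'"
  define Dd where "Dd = nm s (\<lambda>k. u k - u' k) + nm s (\<lambda>k. v k - v' k)"
  define E where "E = Kc s / (real N)\<^sup>2"
  have U0: "U \<ge> 0" "U' \<ge> 0" "Dd \<ge> 0" unfolding U_def U'_def Dd_def by (simp_all add: nm_nonneg add_nonneg_nonneg)
  have E0: "E \<ge> 0" unfolding E_def by (simp add: Kc_nonneg)
  have Npos: "real N > 0" using N by simp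
  have CN: "(C * (1 / real N))\<^sup>2 = 128 * E"
    unfolding C_def E_def using Kc_nonneg[of s] by (simp add: power_mult_distrib power_divide)
  have CN0: "C * (1 / real N) \<ge> 0" unfolding C_def using Npos Kc_nonneg[of s] by simp
  have c1: "W s (compQ N t u v u) \<and> nm s (compQ N t u v u) \<le> 16 * E * U\<^sup>2"
    unfolding E_def by (rule comp_bound[OF s N Wu Wv Wu]) (use nm_nonneg in \<open>auto simp: U_def\<close>)
  have c2: "W s (compQ N t u v v) \<and> nm s (compQ N t u v v) \<le> 16 * E * U\<^sup>2"
    unfolding E_def using comp_bound[OF s N Wu Wv Wv, of U] nm_nonneg[of s u] nm_nonneg[of s v] unfolding U_def by simp
  show "in_Hs s (fst (BQ N t u v))" unfolding BQ_comp in_Hs_iff using c1 comp_R[OF Ru Rv Ru] by simp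
  show "in_Hs s (snd (BQ N t u v))" unfolding BQ_comp in_Hs_iff using c2 comp_R[OF Ru Rv Rv] by simp
  have pu: "pair_norm s u v = sqrt U" unfolding pair_norm_def hs_norm2_nm U_def ..
  have pu': "pair_norm s u' v' = sqrt U'" unfolding pair_norm_def hs_norm2_nm U'_def ..
  have pd: "pair_norm s (\<lambda>k. u k - u' k) (\<lambda>k. v k - v' k) = sqrt Dd" unfolding pair_norm_def hs_norm2_nm Dd_def ..
  show "pair_norm s (fst (BQ N t u v)) (snd (BQ N t u v)) \<le> C * (1 / real N) * (pair_norm s u v)\<^sup>2"
  proof -
    have "nm s (compQ N t u v u) + nm s (compQ N t u v v) \<le> 128 * E * U\<^sup>2"
    proof -
      have "0 \<le> E * U\<^sup>2" using E0 by simp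
      then show ?thesis using c1 c2 by linarith
    qed
    also have "\<dots> = (C * (1 / real N))\<^sup>2 * U\<^sup>2" unfolding CN ..
    also have "\<dots> = (C * (1 / real N) * U)\<^sup>2" by (simp only: power_mult_distrib)
    finally have le: "nm s (compQ N t u v u) + nm s (compQ N t u v v) \<le> (C * (1 / real N) * U)\<^sup>2" .
    have nn: "0 \<le> C * (1 / real N) * U" using CN0 U0(1) by (rule mult_nonneg_nonneg)
    have "sqrt (nm s (compQ N t u v u) + nm s (compQ N t u v v)) \<le> C * (1 / real N) * U"
      by (rule real_le_lsqrt[OF nn le])
    moreover have "(pair_norm s u v)\<^sup>2 = U" unfolding pu using U0 by simp
    moreover have "pair_norm s (fst (BQ N t u v)) (snd (BQ N t u v)) = sqrt (nm s (compQ N t u v u) + nm s (compQ N t u v v))"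
      unfolding pair_norm_def hs_norm2_nm BQ_comp ..
    ultimately show ?thesis by simp
  qed
  have d1: "W s (\<lambda>k. compQ N t u v u k - compQ N t u' v' u' k) \<and>
     nm s (\<lambda>k. compQ N t u v u k - compQ N t u' v' u' k) \<le> 64 * E * (Dd * (U + U'))"
    unfolding E_def by (rule comp_diff_bound[OF s N Wu Wv Wu Wu' Wv' Wu'])
      (use nm_nonneg in \<open>auto simp: U_def U'_def Dd_def\<close>)
  have d2: "W s (\<lambda>k. compQ N t u v v k - compQ N t u' v' v' k) \<and>
     nm s (\<lambda>k. compQ N t u v v k - compQ N t u' v' v' k) \<le> 64 * E * (Dd * (U + U'))"
    unfolding E_def by (rule comp_diff_bound[OF s N Wu Wv Wv Wu' Wv' Wv'])
      (use nm_nonneg in \<open>auto simp: U_def U'_def Dd_def\<close>)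
  show "pair_norm s (\<lambda>k. fst (BQ N t u v) k - fst (BQ N t u' v') k)
                  (\<lambda>k. snd (BQ N t u v) k - snd (BQ N t u' v') k)
        \<le> C * (1 / real N) * pair_norm s (\<lambda>k. u k - u' k) (\<lambda>k. v k - v' k)
            * (pair_norm s u v + pair_norm s u' v')"
  proof -
    have sq: "U + U' \<le> (sqrt U + sqrt U')\<^sup>2"
      using U0 by (simp add: power2_sum)
    have "nm s (\<lambda>k. compQ N t u v u k - compQ N t u' v' u' k) + nm s (\<lambda>k. compQ N t u v v k - compQ N t u' v' v' k)
       \<le> 128 * E * (Dd * (U + U'))" using d1 d2 by simp
    also have "\<dots> \<le> 128 * E * (Dd * (sqrt U + sqrt U')\<^sup>2)"
      using sq E0 U0 by (intro mult_left_mono) auto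
    also have "\<dots> = (C * (1 / real N))\<^sup>2 * (sqrt Dd)\<^sup>2 * (sqrt U + sqrt U')\<^sup>2"
      unfolding CN using U0 by simp
    also have "\<dots> = (C * (1 / real N) * sqrt Dd * (sqrt U + sqrt U'))\<^sup>2"
      by (simp only: power_mult_distrib)
    finally have le2: "nm s (\<lambda>k. compQ N t u v u k - compQ N t u' v' u' k) + nm s (\<lambda>k. compQ N t u v v k - compQ N t u' v' v' k)
       \<le> (C * (1 / real N) * sqrt Dd * (sqrt U + sqrt U'))\<^sup>2" .
    have nn2: "0 \<le> C * (1 / real N) * sqrt Dd * (sqrt U + sqrt U')"
      using U0 by (intro mult_nonneg_nonneg[OF mult_nonneg_nonneg[OF CN0]] add_nonneg_nonneg) auto
    have "sqrt (nm s (\<lambda>k. compQ N t u v u k - compQ N t u' v' u' k) + nm s (\<lambda>k. compQ N t u v v k - compQ N t u' v' v' k))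
       \<le> C * (1 / real N) * sqrt Dd * (sqrt U + sqrt U')"
      by (rule real_le_lsqrt[OF nn2 le2])
    moreover have "pair_norm s (\<lambda>k. fst (BQ N t u v) k - fst (BQ N t u' v') k)
                  (\<lambda>k. snd (BQ N t u v) k - snd (BQ N t u' v') k) =
      sqrt (nm s (\<lambda>k. compQ N t u v u k - compQ N t u' v' u' k) + nm s (\<lambda>k. compQ N t u v v k - compQ N t u' v' v' k))"
      unfolding pair_norm_def hs_norm2_nm BQ_comp ..
    ultimately show ?thesis unfolding pu pu' pd by (simp add: mult.assoc)
  qed
qed


end
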